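(* Let $n>1$ be an integer. There is no matrix $M\in\mathcal S^{n\times n}$ such that simultaneously: (A1) $M$ is distinguished and self-conjugate; (A2) the first row of $M$ is $[1,2,2,\dots,2]$; (A3) $c_i(M)=1$ for all $1\le i\le n$; (A4) every principal submatrix of $M$ of odd degree has a column whose sum of entries equals $1$.
   Context: $\mathcal S=\{0,1,2,3\}$ is the Klein four-group ($\mathbb Z_2$-vector space) with $x+x=0$, $1+2=3$, $1+3=2$, $2+3=1$. Conjugation is the linear involution $\overline{\cdot}$ of $\mathcal S$ with $\bar0=0,\bar1=1,\bar2=3,\bar3=2$. A square matrix $M$ over $\mathcal S$ is self-conjugate if $M^t=\overline M$ (entrywise conjugate), and distinguished if it has $1$ on the diagonal and $2$ or $3$ everywhere off the diagonal. $c_i(M)$ is the sum of the entries of the $i$-th column. A principal submatrix is one given by the same set of row and column indices. *)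

theory Defs
  imports Main
begin

datatype S = S0 | S1 | S2 | S3

fun S_add :: "S \<Rightarrow> S \<Rightarrow> S" where
  "S_add S0 y = y"
| "S_add x S0 = x"
| "S_add S1 S1 = S0" | "S_add S2 S2 = S0" | "S_add S3 S3 = S0"
| "S_add S1 S2 = S3" | "S_add S2 S1 = S3"
| "S_add S1 S3 = S2" | "S_add S3 S1 = S2"
| "S_add S2 S3 = S1" | "S_add S3 S2 = S1"

instantiation S :: comm_monoid_add
begin
definition zero_S_def: "0 = S0"
definition plus_S_def: "x + y = S_add x y"
instance
proof
  fix a b c :: S
  show "a + b + c = a + (b + c)" unfolding plus_S_def
    by (cases a; cases b; cases c) auto
  show "a + b = b + a" unfolding plus_S_def
    by (cases a; cases b) auto
  show "0 + a = a" unfolding plus_S_def zero_S_def by simp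
qed
end

fun conj :: "S \<Rightarrow> S" where
  "conj S0 = S0" | "conj S1 = S1" | "conj S2 = S3" | "conj S3 = S2"

text \<open>n x n matrices over S, indices 0..n-1 (index 0 = paper's index 1).\<close>
type_synonym matS = "nat \<Rightarrow> nat \<Rightarrow> S"

definition self_conjugate :: "nat \<Rightarrow> matS \<Rightarrow> bool" where
  "self_conjugate n M \<longleftrightarrow> (\<forall>i<n. \<forall>j<n. M j i = conj (M i j))"

definition distinguished :: "nat \<Rightarrow> matS \<Rightarrow> bool" where
  "distinguished n M \<longleftrightarrow> (\<forall>i<n. M i i = S1) \<and>
     (\<forall>i<n. \<forall>j<n. i \<noteq> j \<longrightarrow> M i j = S2 \<or> M i j = S3)"

definition col_sum :: "nat set \<Rightarrow> matS \<Rightarrow> nat \<Rightarrow> S" where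
  "col_sum I M j = (\<Sum>i\<in>I. M i j)"

end

theory Submission
  imports Defs
begin

lemma S_plus_simps[simp]:
  "S0 + x = x" "x + S0 = x" "S1 + S1 = S0" "S2 + S2 = S0" "S3 + S3 = S0"
  "S1 + S2 = S3" "S2 + S1 = S3" "S1 + S3 = S2" "S3 + S1 = S2"
  "S2 + S3 = S1" "S3 + S2 = S1"
  unfolding plus_S_def by (cases x; simp)+

lemma sum23:
  assumes "finite F" "\<forall>x\<in>F. f x = S2 \<or> f x = S3"
  shows "sum f F = (if even (card F) then (if even (card {x\<in>F. f x = S3}) then S0 else S1)
                    else (if even (card {x\<in>F. f x = S3}) then S2 else S3))"
  using assms
proof (induction F rule: finite_induct)
  case empty
  then show ?case by (simp add: zero_S_def)
next
  case (insert a F)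
  have fin: "finite {x\<in>F. f x = S3}" using insert by simp
  have an: "a \<notin> {x\<in>F. f x = S3}" using insert by simp
  show ?case
  proof (cases "f a = S3")
    case True
    have "{x\<in>insert a F. f x = S3} = insert a {x\<in>F. f x = S3}" using True by auto
    then have c: "card {x\<in>insert a F. f x = S3} = Suc (card {x\<in>F. f x = S3})"
      using fin an by simp
    show ?thesis using insert True c by auto
  next
    case False
    then have fa: "f a = S2" using insert by auto
    have "{x\<in>insert a F. f x = S3} = {x\<in>F. f x = S3}" using False by auto
    then show ?thesis using insert fa by auto
  qed
qed

theorem mainTheorem4:
  fixes n :: nat
  assumes "n > 1"
  shows "\<not> (\<exists>M :: matS.
            distinguished n M \<and> self_conjugate n M
          \<and> M 0 0 = S1 \<and> (\<forall>j. 0 < j \<and> j < n \<longrightarrow> M 0 j = S2)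
          \<and> (\<forall>j<n. col_sum {0..<n} M j = S1)
          \<and> (\<forall>I. I \<subseteq> {0..<n} \<and> odd (card I) \<longrightarrow>
                 (\<exists>j\<in>I. col_sum I M j = S1)))"
proof
  assume "\<exists>M :: matS.
            distinguished n M \<and> self_conjugate n M
          \<and> M 0 0 = S1 \<and> (\<forall>j. 0 < j \<and> j < n \<longrightarrow> M 0 j = S2)
          \<and> (\<forall>j<n. col_sum {0..<n} M j = S1)
          \<and> (\<forall>I. I \<subseteq> {0..<n} \<and> odd (card I) \<longrightarrow>
                 (\<exists>j\<in>I. col_sum I M j = S1))"
  then obtain M :: matS where D: "distinguished n M" and SC: "self_conjugate n M"
    and R0: "\<forall>j. 0 < j \<and> j < n \<longrightarrow> M 0 j = S2"
    and C: "\<forall>j<n. col_sum {0..<n} M j = S1"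
    and O: "\<forall>I. I \<subseteq> {0..<n} \<and> odd (card I) \<longrightarrow> (\<exists>j\<in>I. col_sum I M j = S1)"
    by blast
  have diag: "\<And>i. i < n \<Longrightarrow> M i i = S1" using D unfolding distinguished_def by blast
  have off: "\<And>i j. i < n \<Longrightarrow> j < n \<Longrightarrow> i \<noteq> j \<Longrightarrow> M i j = S2 \<or> M i j = S3"
    using D unfolding distinguished_def by blast
  have sc: "\<And>i j. i < n \<Longrightarrow> j < n \<Longrightarrow> M j i = conj (M i j)"
    using SC unfolding self_conjugate_def by blast
  have sw: "M i j = S3 \<longleftrightarrow> M j i = S2" if "i < n" "j < n" for i j
  proof (cases "i = j")
    case True
    then show ?thesis using diag[of i] \<open>i < n\<close> by simp
  next
    case False
    have "M j i = conj (M i j)" using sc \<open>i < n\<close> \<open>j < n\<close> by blast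
    moreover have "M i j = S2 \<or> M i j = S3" using off \<open>i < n\<close> \<open>j < n\<close> False by blast
    ultimately show ?thesis by auto
  qed
  define L where "L j = {i\<in>{0..<n}. M i j = S3}" for j
  have finL: "finite (L j)" for j unfolding L_def by simp
  have evL: "even (card (L j))" if j: "j < n" for j
  proof -
    let ?F = "{0..<n} - {j}"
    have eq: "{0..<n} = insert j ?F" using j by auto
    have "col_sum {0..<n} M j = M j j + sum (\<lambda>i. M i j) ?F"
    proof -
      have "sum (\<lambda>i. M i j) {0..<n} = sum (\<lambda>i. M i j) (insert j ?F)"
        by (rule arg_cong[OF eq])
      also have "\<dots> = M j j + sum (\<lambda>i. M i j) ?F" by (rule sum.insert) auto
      finally show ?thesis unfolding col_sum_def .
    qed
    then have s: "S1 + sum (\<lambda>i. M i j) ?F = S1" using C j diag by simp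
    have v: "\<forall>x\<in>?F. M x j = S2 \<or> M x j = S3" using off j by auto
    have LF: "{x\<in>?F. M x j = S3} = L j" unfolding L_def using diag j by auto
    show ?thesis using s sum23[OF _ v] LF
      by (auto split: if_splits)
  qed
  have nocyc: False if "v < n" "w < n" "u < n" "M v w = S2" "M w u = S2" "M u v = S2" for v w u
  proof -
    have vw: "v \<noteq> w" using that diag by auto
    have wu: "w \<noteq> u" using that diag by auto
    have uv: "u \<noteq> v" using that diag by auto
    have b: "M w v = S3" "M u w = S3" "M v u = S3" using that sw by auto
    let ?I = "{v, w, u}"
    have "card ?I = 3" using vw wu uv by auto
    moreover have "?I \<subseteq> {0..<n}" using that by auto
    ultimately obtain j where j: "j \<in> ?I" "col_sum ?I M j = S1" using O[rule_format, of ?I] by auto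
    have "col_sum ?I M v = S0" "col_sum ?I M w = S0" "col_sum ?I M u = S0"
      unfolding col_sum_def using vw wu uv that b diag by (simp_all add: add.commute)
    then show False using j by auto
  qed
  have sub: "L w \<subseteq> L v - {w}" if "v < n" "w \<in> L v" for v w
  proof
    fix u assume u: "u \<in> L w"
    have wn: "w < n" "M w v = S3" using that unfolding L_def by auto
    have un: "u < n" "M u w = S3" using u unfolding L_def by auto
    have vw2: "M v w = S2" using sw[of w v] wn that by simp
    have "u \<noteq> v" using vw2 un by auto
    moreover have "u \<noteq> w" using un diag by auto
    moreover have "M u v = S3"
    proof (rule ccontr)
      assume "M u v \<noteq> S3"
      then have "M u v = S2" using off un that \<open>u \<noteq> v\<close> by blast
      moreover have "M v w = S2" using wn sw that by auto
      moreover have "M w u = S2" using un sw wn by auto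
      ultimately show False using nocyc that wn un by blast
    qed
    ultimately show "u \<in> L v - {w}" using un unfolding L_def by auto
  qed
  have lt: "card (L w) < card (L v)" if "v < n" "w \<in> L v" for v w
  proof -
    have "card (L w) \<le> card (L v - {w})" by (rule card_mono[OF _ sub[OF that]]) (simp add: finL)
    also have "\<dots> < card (L v)" by (rule card_Diff1_less[OF finL[of v] that(2)])
    finally show ?thesis .
  qed
  have "M 0 1 = S2" using R0 assms by simp
  then have "M 1 0 = S3" using sw[of 1 0] assms by simp
  then have "1 \<in> L 0" unfolding L_def using assms by simp
  then have "0 < n \<and> L 0 \<noteq> {}" using assms by auto
  from ex_has_least_nat[of "\<lambda>v. v < n \<and> L v \<noteq> {}", OF this, of "\<lambda>v. card (L v)"]
  obtain v where v: "v < n" "L v \<noteq> {}" and mn: "\<And>y. y < n \<Longrightarrow> L y \<noteq> {} \<Longrightarrow> card (L v) \<le> card (L y)"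
    by blast
  have "card (L v) \<noteq> 0" using v finL[of v] by simp
  then have "card (L v) \<ge> 2" using evL[OF v(1)] by presburger
  then have "1 < card (L v)" by simp
  then obtain w1 w2 where w: "w1 \<in> L v" "w2 \<in> L v" "w1 \<noteq> w2"
  proof -
    obtain w1 where w1: "w1 \<in> L v" using v(2) by blast
    have "card (L v - {w1}) = card (L v) - 1" using w1 finL[of v] by simp
    then have "L v - {w1} \<noteq> {}" using \<open>1 < card (L v)\<close> by fastforce
    then obtain w2 where "w2 \<in> L v - {w1}" by blast
    then show ?thesis using that w1 by blast
  qed
  have n12: "w1 < n" "w2 < n" using w unfolding L_def by auto
  have e1: "L w1 = {}" using mn[OF n12(1)] lt[OF v(1) w(1)] by force
  have e2: "L w2 = {}" using mn[OF n12(2)] lt[OF v(1) w(2)] by force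
  have "M w1 w2 = S2 \<or> M w1 w2 = S3" using off n12 w by blast
  then have "M w2 w1 = S3 \<or> M w1 w2 = S3" using sw[of w2 w1] n12 by auto
  then have "w2 \<in> L w1 \<or> w1 \<in> L w2" using n12 unfolding L_def by auto
  then show False using e1 e2 by auto
qed

end
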